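(* Let $\varepsilon>0$ and $\delta\in(0,1)$ be such that $k=\frac{1}{\varepsilon}\ln\left(\frac{e^{\varepsilon}+2\delta-1}{(e^{\varepsilon}+1)\delta}\right)$ is an integer. Let $X$ be a random variable with the $k$-truncated symmetric geometric distribution with parameter $1-e^{-\varepsilon}$, and let $\pi_{\mathrm{opt}}$ be the optimal partition selection primitive for $(\varepsilon,\delta)$-differential privacy. Then for all $n\in\mathbb{N}$, $\pi_{\mathrm{opt}}(n)=\Pr[n+X\ge k+1]$.
   Context: $\mathbb{N}=\{0,1,2,\dots\}$. For $p\in(0,1)$ and an integer $k\ge1$, the $k$-truncated symmetric geometric distribution with parameter $p$ is the distribution on $\mathbb{Z}$ with $\Pr[X=x]=c\,(1-p)^{|x|}$ for $x\in[-k,k]\cap\mathbb{Z}$ and $0$ otherwise, where $c=\frac{p}{1+(1-p)-2(1-p)^{k+1}}$. A partition selection primitive is a function $\pi:\mathbb{N}\to[0,1]$ with $\pi(0)=0$; it is $(\varepsilon,\delta)$-DP if, letting $\rho_\pi(n)$ be keep with probability $\pi(n)$ and drop otherwise, for all $n,n'\in\mathbb{N}$ with $|n-n'|=1$ and all $S\subseteq\{\mathrm{drop},\mathrm{keep}\}$, $\Pr[\rho_\pi(n)\in S]\le e^{\varepsilon}\Pr[\rho_\pi(n')\in S]+\delta$. The optimal primitive $\pi_{\mathrm{opt}}$ is the $(\varepsilon,\delta)$-DP primitive with $\pi(n)\le\pi_{\mathrm{opt}}(n)$ for every $(\varepsilon,\delta)$-DP primitive $\pi$ and every $n$; equivalently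 $\pi_{\mathrm{opt}}(0)=0$ and $\pi_{\mathrm{opt}}(n+1)=\min\left(e^{\varepsilon}\pi_{\mathrm{opt}}(n)+\delta,\,1-e^{-\varepsilon}(1-\pi_{\mathrm{opt}}(n)-\delta),\,1\right)$. *)

theory Defs
  imports "HOL-Analysis.Analysis"
begin

text \<open>Outcome of the randomized mechanism: True = keep, False = drop.
  The mechanism rho_pi(n) keeps with probability pi n.\<close>
definition rho_prob :: "(nat \<Rightarrow> real) \<Rightarrow> nat \<Rightarrow> bool set \<Rightarrow> real" where
  "rho_prob \<pi> n S = (\<Sum>b\<in>S. if b then \<pi> n else 1 - \<pi> n)"

definition partition_selection_primitive :: "(nat \<Rightarrow> real) \<Rightarrow> bool" where
  "partition_selection_primitive \<pi> \<longleftrightarrow> (\<forall>n. 0 \<le> \<pi> n \<and> \<pi> n \<le> 1) \<and> \<pi> 0 = 0"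

definition dp_primitive :: "real \<Rightarrow> real \<Rightarrow> (nat \<Rightarrow> real) \<Rightarrow> bool" where
  "dp_primitive \<epsilon> \<delta> \<pi> \<longleftrightarrow> partition_selection_primitive \<pi> \<and>
     (\<forall>n n' :: nat. \<forall>S :: bool set. \<bar>int n - int n'\<bar> = 1 \<longrightarrow>
        rho_prob \<pi> n S \<le> exp \<epsilon> * rho_prob \<pi> n' S + \<delta>)"

definition optimal_primitive :: "real \<Rightarrow> real \<Rightarrow> (nat \<Rightarrow> real) \<Rightarrow> bool" where
  "optimal_primitive \<epsilon> \<delta> \<pi>opt \<longleftrightarrow> dp_primitive \<epsilon> \<delta> \<pi>opt \<and>
     (\<forall>\<pi>. dp_primitive \<epsilon> \<delta> \<pi> \<longrightarrow> (\<forall>n. \<pi> n \<le> \<pi>opt n))"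

definition tsg_const :: "real \<Rightarrow> nat \<Rightarrow> real" where
  "tsg_const p k = p / (1 + (1 - p) - 2 * (1 - p) ^ (k + 1))"

definition tsg_pmf :: "real \<Rightarrow> nat \<Rightarrow> int \<Rightarrow> real" where
  "tsg_pmf p k x = (if - int k \<le> x \<and> x \<le> int k then tsg_const p k * (1 - p) ^ nat \<bar>x\<bar> else 0)"

definition tsg_prob :: "real \<Rightarrow> nat \<Rightarrow> int set \<Rightarrow> real" where
  "tsg_prob p k A = (\<Sum>x\<in>{- int k..int k} \<inter> A. tsg_pmf p k x)"

end

theory Submission
  imports Defs
begin

lemma bool_set_cases: "(S::bool set) = {} \<or> S = {True} \<or> S = {False} \<or> S = UNIV"
proof (cases "True \<in> S"; cases "False \<in> S")
  assume h: "True \<in> S" "False \<in> S"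
  have "S = UNIV" proof (rule set_eqI) fix x show "x \<in> S \<longleftrightarrow> x \<in> UNIV" using h by (cases x) simp_all qed
  then show ?thesis by simp
next
  assume h: "True \<in> S" "False \<notin> S"
  have "S = {True}" proof (rule set_eqI) fix x show "x \<in> S \<longleftrightarrow> x \<in> {True}" using h by (cases x) simp_all qed
  then show ?thesis by simp
next
  assume h: "True \<notin> S" "False \<in> S"
  have "S = {False}" proof (rule set_eqI) fix x show "x \<in> S \<longleftrightarrow> x \<in> {False}" using h by (cases x) simp_all qed
  then show ?thesis by simp
next
  assume h: "True \<notin> S" "False \<notin> S"
  have "S = {}" proof (rule set_eqI) fix x show "x \<in> S \<longleftrightarrow> x \<in> {}" using h by (cases x) simp_all qed
  then show ?thesis by simp
qed

lemma rho_simps: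
  "rho_prob \<pi> n {} = 0" "rho_prob \<pi> n {True} = \<pi> n" "rho_prob \<pi> n {False} = 1 - \<pi> n"
  "rho_prob \<pi> n UNIV = 1"
  by (auto simp: rho_prob_def UNIV_bool)

lemma tsg_prob_step:
  "tsg_prob p k {x. int k + 1 \<le> int (Suc n) + x} =
   tsg_prob p k {x. int k + 1 \<le> int n + x} + tsg_pmf p k (int k - int n)"
proof -
  have e: "\<And>A. tsg_prob p k A = (\<Sum>x\<in>{- int k..int k}. if x \<in> A then tsg_pmf p k x else 0)"
    unfolding tsg_prob_def by (rule sum.inter_restrict) simp
  have "(\<Sum>x\<in>{- int k..int k}. if x \<in> {x. int k + 1 \<le> int (Suc n) + x} then tsg_pmf p k x else 0)
     = (\<Sum>x\<in>{- int k..int k}. (if x \<in> {x. int k + 1 \<le> int n + x} then tsg_pmf p k x else 0)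
          + (if x = int k - int n then tsg_pmf p k x else 0))"
    by (rule sum.cong) auto
  also have "\<dots> = tsg_prob p k {x. int k + 1 \<le> int n + x} +
      (\<Sum>x\<in>{- int k..int k}. if x = int k - int n then tsg_pmf p k x else 0)"
    by (simp only: sum.distrib e[symmetric])
  also have "(\<Sum>x\<in>{- int k..int k}. if x = int k - int n then tsg_pmf p k x else 0) = tsg_pmf p k (int k - int n)"
    by (simp add: tsg_pmf_def)
  finally show ?thesis by (simp add: e)
qed

lemma tsg_prob_zero: "tsg_prob p k {x. int k + 1 \<le> int 0 + x} = 0"
  unfolding tsg_prob_def by (auto intro!: sum.neutral)

theorem theorem5:
  fixes \<epsilon> \<delta> :: real and k :: nat and \<pi>opt :: "nat \<Rightarrow> real"
  assumes "\<epsilon> > 0" and "0 < \<delta>" and "\<delta> < 1"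
    and "real k = (1 / \<epsilon>) * ln ((exp \<epsilon> + 2 * \<delta> - 1) / ((exp \<epsilon> + 1) * \<delta>))"
    and "optimal_primitive \<epsilon> \<delta> \<pi>opt"
  shows "\<forall>n::nat. \<pi>opt n = tsg_prob (1 - exp (- \<epsilon>)) k {x. int n + x \<ge> int k + 1}"
proof -
  define E where "E = exp \<epsilon>"
  define q where "q = exp (- \<epsilon>)"
  define p where "p = 1 - q"
  define a where "a = 1 / (1 + q - 2 * q ^ (k + 1))"
  define c where "c = tsg_const p k"
  define u where "u m = a * (q ^ m - q ^ (k + 1))" for m :: nat
  define g where "g n = tsg_prob p k {x. int n + x \<ge> int k + 1}" for n :: nat
  have E1: "E > 1" unfolding E_def using assms(1) by simp
  have Eq: "E * q = 1" unfolding E_def q_def by (simp add: exp_minus)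
  have q0: "q > 0" "q < 1" unfolding q_def using assms(1) by auto
  have qk1: "q ^ (k + 1) \<le> q" using q0 by (simp add: power_le_one)
  have den: "1 + q - 2 * q ^ (k + 1) > 0" using qk1 q0 by linarith
  have ca: "c = a * (1 - q)" unfolding c_def a_def tsg_const_def p_def by simp
  have a0: "a > 0" unfolding a_def using den by simp
  have c0: "c > 0" using ca a0 q0 by simp
  have aden: "a * (1 + q - 2 * q ^ (k + 1)) = 1" unfolding a_def using den by simp
  have Rpos: "(E + 2 * \<delta> - 1) / ((E + 1) * \<delta>) > 0" using E1 assms(2) by simp
  have "exp (real k * \<epsilon>) = (E + 2 * \<delta> - 1) / ((E + 1) * \<delta>)"
    using assms(4) assms(1) Rpos unfolding E_def by simp
  hence "E ^ k = (E + 2 * \<delta> - 1) / ((E + 1) * \<delta>)"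
    unfolding E_def by (simp add: exp_of_nat_mult)
  hence "E ^ k * ((E + 1) * \<delta>) = (E + 2 * \<delta> - 1) / ((E + 1) * \<delta>) * ((E + 1) * \<delta>)" by simp
  hence Ek: "E ^ k * ((E + 1) * \<delta>) = E + 2 * \<delta> - 1" using E1 assms(2) by simp
  have qkE: "q ^ k * E ^ k = 1" using Eq by (metis power_mult_distrib mult.commute power_one)
  have dq: "\<delta> * (E + 1) = q ^ k * (E + 2 * \<delta> - 1)"
    using Ek qkE by (metis mult.assoc mult.commute mult_1)
  have delta: "\<delta> = (E - 1) * a * q ^ (k + 1)"
  proof -
    have "\<delta> * (1 + q - 2 * q ^ (k + 1)) = (E - 1) * q ^ (k + 1)"
    proof -
      have "E * (\<delta> * (1 + q - 2 * q ^ (k + 1))) = \<delta> * (E + E * q) - 2 * \<delta> * (E * q) * q ^ k"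
        by (simp add: algebra_simps)
      also have "\<dots> = \<delta> * (E + 1) - 2 * \<delta> * q ^ k" using Eq by simp
      also have "\<dots> = q ^ k * (E - 1)" using dq by (simp add: algebra_simps)
      also have "\<dots> = (E * q) * ((E - 1) * q ^ k)" using Eq by simp
      also have "\<dots> = E * ((E - 1) * q ^ (k + 1))" by (simp add: algebra_simps)
      finally show ?thesis using E1 by simp
    qed
    then show ?thesis using aden unfolding a_def using den by (simp add: field_simps)
  qed
  have urec: "u m = E * u (Suc m) + \<delta>" for m
    unfolding u_def delta using Eq by (simp add: algebra_simps)
  have pmf_eq: "tsg_pmf p k x = (if - int k \<le> x \<and> x \<le> int k then c * q ^ nat \<bar>x\<bar> else 0)" for x
    unfolding tsg_pmf_def c_def p_def by simp
  have g0: "g 0 = 0" unfolding g_def using tsg_prob_zero[of p k] by (simp add: add.commute)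
  have gS: "g (Suc n) = g n + tsg_pmf p k (int k - int n)" for n
    unfolding g_def using tsg_prob_step[of p k n] by (simp add: add.commute)
  have pmf0: "tsg_pmf p k x \<ge> 0" for x using c0 q0 by (simp add: pmf_eq)
  have mono: "g n \<le> g (Suc n)" for n using gS pmf0 by simp
  have inc: "incseq g" using mono by (simp add: incseq_SucI)
  have R1: "n \<le> k + 1 \<Longrightarrow> g n = u (k + 1 - n)" for n
  proof (induction n)
    case 0 then show ?case using g0 by (simp add: u_def)
  next
    case (Suc n)
    have "k + 1 - n = Suc (k - n)" using Suc by simp
    moreover have "tsg_pmf p k (int k - int n) = c * q ^ (k - n)"
      using Suc by (simp add: pmf_eq nat_diff_distrib)
    ultimately show ?case using Suc gS[of n] unfolding u_def ca
      by (simp add: algebra_simps)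
  qed
  have u0: "u 0 = 1 - u 1" using aden unfolding u_def by (simp add: algebra_simps)
  have R2: "m \<le> k \<Longrightarrow> g (k + 1 + m) = 1 - u (m + 1)" for m
  proof (induction m)
    case 0 then show ?case using R1[of "k+1"] u0 by simp
  next
    case (Suc m)
    have "tsg_pmf p k (int k - int (k + 1 + m)) = c * q ^ (m + 1)"
      using Suc by (simp add: pmf_eq nat_add_distrib)
    then show ?case using Suc gS[of "k + 1 + m"] unfolding u_def ca
      by (simp add: algebra_simps)
  qed
  have R3: "g (2 * k + 1 + m) = 1" for m
  proof (induction m)
    case 0 then show ?case using R2[of k] by (simp add: u_def mult_2)
  next
    case (Suc m)
    have "tsg_pmf p k (int k - int (2 * k + 1 + m)) = 0" by (simp add: pmf_eq)
    then show ?case using Suc gS[of "2 * k + 1 + m"] by simp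
  qed
  have gge: "g n \<ge> 0" for n using incseqD[OF inc, of 0 n] g0 by simp
  have gle: "g n \<le> 1" for n using incseqD[OF inc, of n "2 * k + 1 + n"] R3[of n] by simp
  have key: "(E + 1) * g k + \<delta> = 1"
  proof -
    have "g k = u 1" using R1[of k] by simp
    moreover have "u 0 = E * u 1 + \<delta>" using urec[of 0] by simp
    ultimately show ?thesis using u0 by (simp add: distrib_right)
  qed
  have cases3: "(g (Suc n) = E * g n + \<delta> \<and> (E + 1) * g n + \<delta> \<le> 1) \<or>
      (E * (1 - g (Suc n)) + \<delta> = 1 - g n \<and> (E + 1) * g n + \<delta> \<ge> 1) \<or>
      (g n = 1 \<and> g (Suc n) = 1)" for n
  proof -
    consider "n \<le> k" | "k \<le> n" "n \<le> 2 * k" | "n \<ge> 2 * k + 1" by linarith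
    then show ?thesis
    proof cases
      case 1
      have h1: "g (Suc n) = E * g n + \<delta>"
        using R1[of n] R1[of "Suc n"] 1 urec[of "k - n"] by (simp add: Suc_diff_le)
      have "g n \<le> g k" using incseqD[OF inc] 1 by simp
      then have h2: "(E + 1) * g n \<le> (E + 1) * g k" using E1 by (intro mult_left_mono) auto
      have h3: "(E + 1) * g n + \<delta> \<le> 1" using h2 key by linarith
      show ?thesis by (rule disjI1, rule conjI[OF h1 h3])
    next
      case 2
      define m where "m = n - k"
      have m: "n = k + m" "m \<le> k" using 2 unfolding m_def by simp_all
      have a1: "1 - g (Suc n) = u (m + 1)" using R2[of m] m by simp
      have a2: "1 - g n = u m"
      proof (cases m)
        case 0 then show ?thesis using m R1[of k] u0 by simp
      next
        case (Suc m') then show ?thesis using m R2[of m'] by simp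
      qed
      have h1: "E * (1 - g (Suc n)) + \<delta> = 1 - g n" using a1 a2 urec[of m] by simp
      have "g k \<le> g n" using incseqD[OF inc] 2 by simp
      then have h2: "(E + 1) * g k \<le> (E + 1) * g n" using E1 by (intro mult_left_mono) auto
      have h3: "(E + 1) * g n + \<delta> \<ge> 1" using h2 key by linarith
      show ?thesis by (rule disjI2, rule disjI1, rule conjI[OF h1 h3])
    next
      case 3
      define m where "m = n - (2 * k + 1)"
      have "n = 2 * k + 1 + m" using 3 unfolding m_def by simp
      then have "g n = 1" "g (Suc n) = 1" using R3[of m] R3[of "Suc m"] by simp_all
      then show ?thesis by (intro disjI2 conjI)
    qed
  qed
  have C1: "g (Suc n) \<le> E * g n + \<delta>" for n
  proof -
    from cases3[of n] show ?thesis
    proof (elim disjE conjE)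
      assume "g (Suc n) = E * g n + \<delta>" then show ?thesis by simp
    next
      assume 2: "E * (1 - g (Suc n)) + \<delta> = 1 - g n" "(E + 1) * g n + \<delta> \<ge> 1"
      have eq: "E * g (Suc n) = E + \<delta> - 1 + g n" using 2(1) by (simp add: algebra_simps)
      have "E * (E * g n + \<delta>) - E * g (Suc n) = (E - 1) * ((E + 1) * g n + \<delta> - 1)"
        using eq by (simp add: algebra_simps)
      moreover have "(E - 1) * ((E + 1) * g n + \<delta> - 1) \<ge> 0" using 2(2) E1 by simp
      ultimately have "E * g (Suc n) \<le> E * (E * g n + \<delta>)" by linarith
      then show ?thesis using E1 by simp
    next
      assume "g n = 1" "g (Suc n) = 1" then show ?thesis using E1 assms(2) by simp
    qed
  qed
  have C2: "1 - g n \<le> E * (1 - g (Suc n)) + \<delta>" for n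
  proof -
    from cases3[of n] show ?thesis
    proof (elim disjE conjE)
      assume 1: "g (Suc n) = E * g n + \<delta>" "(E + 1) * g n + \<delta> \<le> 1"
      have "E * (1 - g (Suc n)) + \<delta> - (1 - g n) = (E - 1) * (1 - (E + 1) * g n - \<delta>)"
        using 1(1) by (simp add: algebra_simps)
      moreover have "(E - 1) * (1 - (E + 1) * g n - \<delta>) \<ge> 0" using 1(2) E1 by simp
      ultimately show ?thesis by linarith
    next
      assume "E * (1 - g (Suc n)) + \<delta> = 1 - g n" then show ?thesis by simp
    next
      assume "g n = 1" "g (Suc n) = 1" then show ?thesis using E1 assms(2) by simp
    qed
  qed
  have gdp: "dp_primitive \<epsilon> \<delta> g"
    unfolding dp_primitive_def partition_selection_primitive_def
  proof (intro conjI allI impI)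
    fix n n' :: nat and S :: "bool set"
    assume "\<bar>int n - int n'\<bar> = 1"
    then have "n' = Suc n \<or> n = Suc n'" by linarith
    then show "rho_prob g n S \<le> exp \<epsilon> * rho_prob g n' S + \<delta>"
    proof
      assume n': "n' = Suc n"
      have "(E - 1) * g n' \<ge> 0" using E1 gge[of n'] by simp
      then have "g n' \<le> E * g n'" by (simp add: algebra_simps)
      then have "g n \<le> E * g n'" using mono[of n] n' by simp
      then show ?thesis using bool_set_cases[of S] C2[of n] n' assms(2) E1
        unfolding E_def[symmetric] by (auto simp: rho_simps)
    next
      assume n: "n = Suc n'"
      have "(E - 1) * (1 - g n') \<ge> 0" using E1 gle[of n'] by simp
      then have "1 - g n' \<le> E * (1 - g n')" by (simp add: algebra_simps)
      then have "1 - g n \<le> E * (1 - g n')" using mono[of n'] n by simp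
      then show ?thesis using bool_set_cases[of S] C1[of n'] n assms(2) E1
        unfolding E_def[symmetric] by (auto simp: rho_simps)
    qed
  qed (use g0 gge gle in auto)
  have dom: "\<pi> n \<le> g n" if dp: "dp_primitive \<epsilon> \<delta> \<pi>" for \<pi> n
  proof -
    have p1: "\<pi> (Suc m) \<le> E * \<pi> m + \<delta>" for m
    proof -
      have "\<bar>int (Suc m) - int m\<bar> = 1" by simp
      then show ?thesis using dp unfolding dp_primitive_def E_def by (metis rho_simps(2))
    qed
    have p2: "1 - \<pi> m \<le> E * (1 - \<pi> (Suc m)) + \<delta>" for m
    proof -
      have "\<bar>int m - int (Suc m)\<bar> = 1" by simp
      then show ?thesis using dp unfolding dp_primitive_def E_def by (metis rho_simps(3))
    qed
    have p3: "\<pi> m \<le> 1" for m using dp unfolding dp_primitive_def partition_selection_primitive_def by simp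
    show ?thesis
    proof (induction n)
      case 0 then show ?case using dp g0 unfolding dp_primitive_def partition_selection_primitive_def by simp
    next
      case (Suc n)
      show ?case using cases3[of n]
      proof (elim disjE conjE)
        assume "g (Suc n) = E * g n + \<delta>"
        then show ?case using p1[of n] Suc E1 by (smt (verit) mult_left_mono)
      next
        assume h: "E * (1 - g (Suc n)) + \<delta> = 1 - g n"
        have "E * (1 - g (Suc n)) \<le> E * (1 - \<pi> (Suc n))" using h p2[of n] Suc by linarith
        then show ?case using E1 by simp
      next
        assume "g (Suc n) = 1" then show ?case using p3 by simp
      qed
    qed
  qed
  show ?thesis
  proof
    fix n
    have "\<pi>opt n \<le> g n" using assms(5) dom unfolding optimal_primitive_def by blast
    moreover have "g n \<le> \<pi>opt n" using assms(5) gdp unfolding optimal_primitive_def by blast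
    ultimately show "\<pi>opt n = tsg_prob (1 - exp (- \<epsilon>)) k {x. int n + x \<ge> int k + 1}"
      unfolding g_def p_def q_def by simp
  qed
qed

end
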